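(* Let $u$ be a drift function. The following are equivalent: (i) $\mathcal F^1_u$ and $\mathcal E^1_u$ coincide as sets with equivalent norms; (ii) there are $a\in[0,1)$ and $b\in\mathbb R$ with $Pu\le au+b$ on $\mathbf X$; (iii) $u\in\mathcal E^1_u$.
   Context: $(X_n)$ Markov chain on a complete separable metric space $\mathbf X$, $\mathbb P_x$ its law from $x$, $Pf(x)=\mathbb E_xf(X_1)$; $\tau$ a $\theta$-compatible stopping time ($\mathbb P_x(\tau=0)=0$ and $\mathbb P_x$-a.s. $\tau\ge2\Rightarrow\tau\circ\theta=\tau-1$, $\theta$ the shift) with $\mathbb E_x\tau<\infty$ for all $x$. $Qf(x)=\mathbb E_x[f(X_\tau)\mathbf 1_{\tau<\infty}]$. A drift function is a Borel $u:\mathbf X\to[1,\infty)$ such that $u-Pu$ is bounded below and $Qu$, $x\mapsto\mathbb E_x\tau/u(x)$ and $P(u-Pu+B_u)/(u-Pu+B_u)$ are bounded on $\mathbf X$, where $B_u=\sup_{\mathbf X}(Pu-u)+1$. For Borel $v:\mathbf X\to[1,\infty)$ and $p\ge1$, $\mathcal F^p_v$ is the Banach space of Borel $f$ with $\sup|f|^p/v<\infty$, with norm $\sup_x|f(x)|/v(x)^{1/p}$; $\mathcal E^p_u:=\mathcal F^p_{u-Pu+B_u}$. *)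

theory Defs
  imports "HOL-Probability.Probability" "HOL-Library.Extended_Nat"
begin

text \<open>Canonical path space: trajectories are streams, X n \<omega> = \<omega> !! n, the shift is stl.
  Px x is the law of the chain started at x, K is its transition kernel.\<close>

definition markov_law :: "('a::polish_space \<Rightarrow> 'a measure) \<Rightarrow> ('a \<Rightarrow> 'a stream measure) \<Rightarrow> bool" where
  "markov_law K Px \<longleftrightarrow>
     K \<in> borel \<rightarrow>\<^sub>M prob_algebra borel \<and>
     Px \<in> borel \<rightarrow>\<^sub>M prob_algebra (stream_space borel) \<and>
     (\<forall>x. Px x = K x \<bind> (\<lambda>y. distr (Px y) (stream_space borel) (\<lambda>\<omega>. x ## \<omega>)))"

text \<open>Stopping time for the natural filtration of the coordinate process (values in enat, \<infinity> allowed).\<close>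
definition stopping_time_nat :: "('a::polish_space stream \<Rightarrow> enat) \<Rightarrow> bool" where
  "stopping_time_nat \<tau> \<longleftrightarrow>
     \<tau> \<in> stream_space (borel :: 'a measure) \<rightarrow>\<^sub>M count_space UNIV \<and>
     (\<forall>n::nat. \<forall>\<omega> \<omega>'. stake (Suc n) \<omega> = stake (Suc n) \<omega>' \<longrightarrow> (\<tau> \<omega> = enat n \<longleftrightarrow> \<tau> \<omega>' = enat n))"

definition theta_compatible :: "('a \<Rightarrow> 'a stream measure) \<Rightarrow> ('a stream \<Rightarrow> enat) \<Rightarrow> bool" where
  "theta_compatible Px \<tau> \<longleftrightarrow>
     (\<forall>x. emeasure (Px x) {\<omega> \<in> space (Px x). \<tau> \<omega> = 0} = 0) \<and>
     (\<forall>x. AE \<omega> in Px x. \<tau> \<omega> \<ge> 2 \<longrightarrow> \<tau> (stl \<omega>) = \<tau> \<omega> - 1)"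

definition Pn :: "('a \<Rightarrow> 'a stream measure) \<Rightarrow> ('a \<Rightarrow> real) \<Rightarrow> 'a \<Rightarrow> ennreal" where
  "Pn Px f x = (\<integral>\<^sup>+ \<omega>. ennreal (f (\<omega> !! 1)) \<partial>Px x)"

text \<open>Real-valued P f (used only where P f is finite).\<close>
definition Pr :: "('a \<Rightarrow> 'a stream measure) \<Rightarrow> ('a \<Rightarrow> real) \<Rightarrow> 'a \<Rightarrow> real" where
  "Pr Px f x = enn2real (Pn Px f x)"

definition Qn :: "('a \<Rightarrow> 'a stream measure) \<Rightarrow> ('a stream \<Rightarrow> enat) \<Rightarrow> ('a \<Rightarrow> real) \<Rightarrow> 'a \<Rightarrow> ennreal" where
  "Qn Px \<tau> f x = (\<integral>\<^sup>+ \<omega>. (if \<tau> \<omega> < \<infinity> then ennreal (f (\<omega> !! the_enat (\<tau> \<omega>))) else 0) \<partial>Px x)"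

definition exp_tau :: "('a \<Rightarrow> 'a stream measure) \<Rightarrow> ('a stream \<Rightarrow> enat) \<Rightarrow> 'a \<Rightarrow> ennreal" where
  "exp_tau Px \<tau> x = (\<integral>\<^sup>+ \<omega>. ennreal_of_enat (\<tau> \<omega>) \<partial>Px x)"

definition B_u :: "('a \<Rightarrow> 'a stream measure) \<Rightarrow> ('a \<Rightarrow> real) \<Rightarrow> real" where
  "B_u Px u = (SUP x. Pr Px u x - u x) + 1"

definition E_weight :: "('a \<Rightarrow> 'a stream measure) \<Rightarrow> ('a \<Rightarrow> real) \<Rightarrow> 'a \<Rightarrow> real" where
  "E_weight Px u x = u x - Pr Px u x + B_u Px u"

definition drift_function :: "('a::polish_space \<Rightarrow> 'a stream measure) \<Rightarrow> ('a stream \<Rightarrow> enat) \<Rightarrow> ('a \<Rightarrow> real) \<Rightarrow> bool" where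
  "drift_function Px \<tau> u \<longleftrightarrow>
     u \<in> borel_measurable borel \<and> (\<forall>x. 1 \<le> u x) \<and>
     \<comment> \<open>u - Pu bounded below (in particular Pu is finite)\<close>
     (\<exists>c. \<forall>x. Pn Px u x \<le> ennreal (u x + c)) \<and>
     \<comment> \<open>Qu bounded\<close>
     (\<exists>c. \<forall>x. Qn Px \<tau> u x \<le> ennreal c) \<and>
     \<comment> \<open>E_x tau / u(x) bounded\<close>
     (\<exists>c. \<forall>x. exp_tau Px \<tau> x \<le> ennreal (c * u x)) \<and>
     \<comment> \<open>P(u - Pu + B_u) / (u - Pu + B_u) bounded\<close>
     (\<exists>c. \<forall>x. Pn Px (E_weight Px u) x \<le> ennreal (c * E_weight Px u x))"

definition Fspace :: "real \<Rightarrow> ('a::topological_space \<Rightarrow> real) \<Rightarrow> ('a \<Rightarrow> real) set" where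
  "Fspace p v = {f. f \<in> borel_measurable borel \<and> bdd_above (range (\<lambda>x. \<bar>f x\<bar> powr p / v x))}"

definition Fnorm :: "real \<Rightarrow> ('a \<Rightarrow> real) \<Rightarrow> ('a \<Rightarrow> real) \<Rightarrow> real" where
  "Fnorm p v f = (SUP x. \<bar>f x\<bar> / v x powr (1 / p))"

end

theory Submission
  imports Defs
begin

lemma Fspace1: "Fspace 1 v = {f. f \<in> borel_measurable borel \<and> bdd_above (range (\<lambda>x. \<bar>f x\<bar> / v x))}"
  by (simp add: Fspace_def)

lemma Fnorm1: "(\<And>x. 0 < v x) \<Longrightarrow> Fnorm 1 v f = (SUP x. \<bar>f x\<bar> / v x)"
  unfolding Fnorm_def by (simp add: abs_of_pos)

lemma cmp_aux:
  fixes v v' f :: "'a \<Rightarrow> real"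
  assumes pos: "\<And>x. 0 < v x" "\<And>x. 0 < v' x" and C: "0 < C"
    and le: "\<And>x. v' x \<le> C * v x"
    and bdd: "bdd_above (range (\<lambda>x. \<bar>f x\<bar> / v' x))"
  shows "bdd_above (range (\<lambda>x. \<bar>f x\<bar> / v x)) \<and>
         (SUP x. \<bar>f x\<bar> / v x) \<le> C * (SUP x. \<bar>f x\<bar> / v' x)"
proof -
  have pt: "\<bar>f x\<bar> / v x \<le> C * (\<bar>f x\<bar> / v' x)" for x
  proof -
    have "\<bar>f x\<bar> * v' x \<le> \<bar>f x\<bar> * (C * v x)"
      using le[of x] by (simp add: mult_left_mono)
    then show ?thesis using pos[of x] C
      by (simp add: field_simps)
  qed
  have up: "\<bar>f x\<bar> / v' x \<le> (SUP x. \<bar>f x\<bar> / v' x)" for x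
    by (rule cSUP_upper[OF _ bdd]) simp
  have pt2: "\<bar>f x\<bar> / v x \<le> C * (SUP x. \<bar>f x\<bar> / v' x)" for x
    using pt[of x] mult_left_mono[OF up[of x], of C] C by linarith
  show ?thesis
  proof
    show "bdd_above (range (\<lambda>x. \<bar>f x\<bar> / v x))"
      using pt2 by (intro bdd_aboveI2) 
    show "(SUP x. \<bar>f x\<bar> / v x) \<le> C * (SUP x. \<bar>f x\<bar> / v' x)"
      by (rule cSUP_least) (use pt2 in auto)
  qed
qed

theorem mainTheorem11:
  fixes K :: "'a::polish_space \<Rightarrow> 'a measure"
    and Px :: "'a \<Rightarrow> 'a stream measure"
    and \<tau> :: "'a stream \<Rightarrow> enat"
    and u :: "'a \<Rightarrow> real"
  assumes "markov_law K Px"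
    and "stopping_time_nat \<tau>"
    and "theta_compatible Px \<tau>"
    and "\<forall>x. exp_tau Px \<tau> x < \<infinity>"
    and "drift_function Px \<tau> u"
  shows "((Fspace 1 u = Fspace 1 (E_weight Px u) \<and>
            (\<exists>c1>0. \<exists>c2>0. \<forall>f \<in> Fspace 1 u.
               Fnorm 1 (E_weight Px u) f \<le> c1 * Fnorm 1 u f \<and>
               Fnorm 1 u f \<le> c2 * Fnorm 1 (E_weight Px u) f))
          \<longleftrightarrow> (\<exists>a b. 0 \<le> a \<and> a < 1 \<and> (\<forall>x. Pr Px u x \<le> a * u x + b)))
       \<and> ((\<exists>a b. 0 \<le> a \<and> a < 1 \<and> (\<forall>x. Pr Px u x \<le> a * u x + b))
          \<longleftrightarrow> u \<in> Fspace 1 (E_weight Px u))"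
proof -
  define w where "w = E_weight Px u"
  define B where "B = B_u Px u"
  have meas: "u \<in> borel_measurable borel" and u1: "\<And>x. 1 \<le> u x"
    using assms(5) by (auto simp: drift_function_def)
  obtain c where c: "\<And>x. Pn Px u x \<le> ennreal (u x + c)"
    using assms(5) unfolding drift_function_def by blast
  have Pr0: "0 \<le> Pr Px u x" for x by (simp add: Pr_def)
  have PrM: "Pr Px u x - u x \<le> max 0 c" for x
  proof (cases "0 \<le> u x + c")
    case True
    have "Pr Px u x \<le> u x + c"
      unfolding Pr_def using c[of x] True
      by (metis enn2real_ennreal enn2real_mono ennreal_less_top)
    then show ?thesis by simp
  next
    case False
    then have "Pn Px u x = 0" using c[of x] by (simp add: ennreal_neg)
    then show ?thesis using u1[of x] by (simp add: Pr_def)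
  qed
  have bddP: "bdd_above (range (\<lambda>x. Pr Px u x - u x))"
    using PrM by (intro bdd_aboveI2) 
  have hB: "Pr Px u x - u x \<le> B - 1" for x
    unfolding B_def B_u_def using cSUP_upper[OF _ bddP, of x] by simp
  have w_def': "w x = u x - Pr Px u x + B" for x
    by (simp add: w_def B_def E_weight_def)
  have w1: "1 \<le> w x" for x using hB[of x] w_def'[of x] by simp
  have wpos: "0 < w x" for x using w1[of x] by simp
  have upos: "0 < u x" for x using u1[of x] by simp
  define C2 where "C2 = 1 + \<bar>B\<bar>"
  have C2: "0 < C2" by (simp add: C2_def)
  have wle: "w x \<le> C2 * u x" for x
  proof -
    have "w x \<le> u x + \<bar>B\<bar>" using w_def'[of x] Pr0[of x] by simp
    also have "\<dots> \<le> u x + \<bar>B\<bar> * u x" using u1[of x] mult_left_mono[of 1 "u x" "\<bar>B\<bar>"] by simp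
    finally show ?thesis by (simp add: C2_def algebra_simps)
  qed
  have Fw_sub: "Fspace 1 w \<subseteq> Fspace 1 u"
    using cmp_aux[of u w C2, OF upos wpos C2 wle] unfolding Fspace1 by auto
  have iii_ii: "\<exists>a b. 0 \<le> a \<and> a < 1 \<and> (\<forall>x. Pr Px u x \<le> a * u x + b)"
    if "u \<in> Fspace 1 w"
  proof -
    from that have "bdd_above (range (\<lambda>x. u x / w x))"
      unfolding Fspace1 using upos by (simp add: abs_of_pos)
    then obtain C where C: "\<And>x. u x / w x \<le> C" by (auto simp: bdd_above_def)
    define C' where "C' = max C 1"
    have C'1: "1 \<le> C'" by (simp add: C'_def)
    have uC: "u x \<le> C' * w x" for x
      using C[of x] wpos[of x] by (simp add: C'_def divide_le_eq) (smt (verit) mult_right_mono wpos)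
    have "Pr Px u x \<le> (1 - 1 / C') * u x + B" for x
    proof -
      have "u x / C' \<le> w x" using uC[of x] C'1 by (simp add: divide_le_eq mult.commute)
      then show ?thesis using w_def'[of x] by (simp add: algebra_simps)
    qed
    moreover have "0 \<le> 1 - 1 / C'" "1 - 1 / C' < 1" using C'1 by auto
    ultimately show ?thesis by blast
  qed
  have ii_i: "Fspace 1 u = Fspace 1 w \<and>
            (\<exists>c1>0. \<exists>c2>0. \<forall>f \<in> Fspace 1 u.
               Fnorm 1 w f \<le> c1 * Fnorm 1 u f \<and> Fnorm 1 u f \<le> c2 * Fnorm 1 w f)"
    if "\<exists>a b. 0 \<le> a \<and> a < 1 \<and> (\<forall>x. Pr Px u x \<le> a * u x + b)"
  proof -
    from that obtain a b where ab: "0 \<le> a" "a < 1" "\<And>x. Pr Px u x \<le> a * u x + b" by blast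
    define C1 where "C1 = (1 + \<bar>b - B\<bar>) / (1 - a)"
    have C1: "0 < C1" using ab by (simp add: C1_def add_pos_nonneg)
    have ule: "u x \<le> C1 * w x" for x
    proof -
      have "(1 - a) * u x \<le> w x + (b - B)" using ab(3)[of x] w_def'[of x] by (simp add: algebra_simps)
      also have "\<dots> \<le> w x + \<bar>b - B\<bar> * w x"
        using w1[of x] mult_left_mono[of 1 "w x" "\<bar>b - B\<bar>"] by simp
      finally have "(1 - a) * u x \<le> (1 + \<bar>b - B\<bar>) * w x" by (simp add: algebra_simps)
      then show ?thesis using ab by (simp add: C1_def field_simps)
    qed
    have sub: "Fspace 1 u \<subseteq> Fspace 1 w"
      using cmp_aux[of w u C1, OF wpos upos C1 ule] unfolding Fspace1 by auto
    have eq: "Fspace 1 u = Fspace 1 w" using sub Fw_sub by blast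
    have "\<forall>f \<in> Fspace 1 u. Fnorm 1 w f \<le> C1 * Fnorm 1 u f \<and> Fnorm 1 u f \<le> C2 * Fnorm 1 w f"
    proof (intro ballI conjI)
      fix f assume f: "f \<in> Fspace 1 u"
      then have bu: "bdd_above (range (\<lambda>x. \<bar>f x\<bar> / u x))" unfolding Fspace1 by simp
      have bw: "bdd_above (range (\<lambda>x. \<bar>f x\<bar> / w x))" using f sub unfolding Fspace1 by auto
      show "Fnorm 1 w f \<le> C1 * Fnorm 1 u f"
        using cmp_aux[of w u C1, OF wpos upos C1 ule bu] by (simp add: Fnorm1 wpos upos)
      show "Fnorm 1 u f \<le> C2 * Fnorm 1 w f"
        using cmp_aux[of u w C2, OF upos wpos C2 wle bw] by (simp add: Fnorm1 wpos upos)
    qed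
    then show ?thesis using eq C1 C2 by blast
  qed
  have uFu: "u \<in> Fspace 1 u"
  proof -
    have "\<bar>u x\<bar> / u x \<le> 1" for x using upos[of x] by simp
    then have "bdd_above (range (\<lambda>x. \<bar>u x\<bar> / u x))" by (intro bdd_aboveI2)
    then show ?thesis unfolding Fspace1 using meas by blast
  qed
  show ?thesis
    unfolding w_def[symmetric]
    using ii_i iii_ii uFu by blast
qed

end
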